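(* Let $p\ge 3$ and $X\sim\mathrm{S1}(\mu_0,\mu_1,\kappa_0,\kappa_1)$. Then the expectation $E(X)\in\mathbb{R}^p$ (of $X$ viewed as a random vector in the ambient space $\mathbb{R}^p$) is a linear combination of $\mu_0$ and $\mu_1$.
   Context: For parameters $\mu_0,\mu_1\in\mathbb{S}^{p-1}$ with $\nu=\mu_0^\top\mu_1\in(-1,1)$ and $\kappa_0,\kappa_1>0$, $\mathrm{S1}(\mu_0,\mu_1,\kappa_0,\kappa_1)$ denotes the distribution on $\mathbb{S}^{p-1}$ with density (w.r.t. surface measure) proportional to $\exp\{-\kappa_0(\mu_0^\top x-\nu)^2+\kappa_1\mu_1^\top x\}$. *)

theory Defs
  imports "HOL-Analysis.Analysis" "HOL-Probability.Probability"
begin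

text \<open>Surface measure on the unit sphere S^(p-1) of a Euclidean space of dimension p,
  realised as the cone measure: sigma(A) = p * Leb({t x. x in A, 0 <= t <= 1}),
  i.e. p times the push-forward of Lebesgue measure on the open unit ball
  under the radial projection x |-> x / |x| (the origin is a null set).\<close>
definition sphere_surface :: "'a::euclidean_space measure" where
  "sphere_surface =
     density (distr (restrict_space lborel (ball 0 1)) borel sgn) (\<lambda>_. ennreal (real DIM('a)))"

definition S1_dens :: "'a::euclidean_space \<Rightarrow> 'a \<Rightarrow> real \<Rightarrow> real \<Rightarrow> 'a \<Rightarrow> real" where
  "S1_dens \<mu>0 \<mu>1 \<kappa>0 \<kappa>1 x =
     exp (- \<kappa>0 * ((\<mu>0 \<bullet> x) - (\<mu>0 \<bullet> \<mu>1))\<^sup>2 + \<kappa>1 * (\<mu>1 \<bullet> x))"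

definition S1 :: "'a::euclidean_space \<Rightarrow> 'a \<Rightarrow> real \<Rightarrow> real \<Rightarrow> 'a measure" where
  "S1 \<mu>0 \<mu>1 \<kappa>0 \<kappa>1 =
     density sphere_surface
       (\<lambda>x. ennreal (S1_dens \<mu>0 \<mu>1 \<kappa>0 \<kappa>1 x /
                     integral\<^sup>L sphere_surface (S1_dens \<mu>0 \<mu>1 \<kappa>0 \<kappa>1)))"

end

theory Submission
  imports Defs
begin


lemma lborel_iso:
  fixes \<phi> :: "'a::euclidean_space \<Rightarrow> 'b::euclidean_space" and \<psi> :: "'b \<Rightarrow> 'a"
  assumes lin: "linear \<phi>" "linear \<psi>"
    and inv: "\<And>x. \<psi> (\<phi> x) = x" "\<And>y. \<phi> (\<psi> y) = y"
    and bij: "bij_betw \<phi> Basis Basis"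
    and inn: "\<And>x y. \<phi> x \<bullet> \<phi> y = x \<bullet> y"
  shows "distr lborel borel \<phi> = lborel"
proof (rule lborel_eqI[symmetric])
  have meas[measurable]: "\<phi> \<in> borel_measurable borel"
    using lin(1) by (intro borel_measurable_continuous_onI linear_continuous_on) (simp add: linear_conv_bounded_linear)
  have key: "\<psi> y \<bullet> a = y \<bullet> \<phi> a" for y a
    by (metis inn inv(2))
  fix l u :: 'b assume le: "\<And>b. b \<in> Basis \<Longrightarrow> l \<bullet> b \<le> u \<bullet> b"
  have pre: "\<phi> -` box l u = box (\<psi> l) (\<psi> u)"
  proof -
    have "x \<in> box (\<psi> l) (\<psi> u) \<longleftrightarrow> (\<forall>a\<in>Basis. l \<bullet> \<phi> a < \<phi> x \<bullet> \<phi> a \<and> \<phi> x \<bullet> \<phi> a < u \<bullet> \<phi> a)" for x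
      by (simp add: mem_box key inn)
    also have "\<dots> x \<longleftrightarrow> (\<forall>b\<in>\<phi> ` Basis. l \<bullet> b < \<phi> x \<bullet> b \<and> \<phi> x \<bullet> b < u \<bullet> b)" for x
      by simp
    also have "\<dots> x \<longleftrightarrow> (\<forall>b\<in>Basis. l \<bullet> b < \<phi> x \<bullet> b \<and> \<phi> x \<bullet> b < u \<bullet> b)" for x
      using bij unfolding bij_betw_def by simp
    finally show ?thesis by (auto simp: mem_box)
  qed
  have le': "\<forall>a\<in>Basis. \<psi> l \<bullet> a \<le> \<psi> u \<bullet> a"
    using bij le by (auto simp: key bij_betw_def)
  have "emeasure (distr lborel borel \<phi>) (box l u) = emeasure lborel (box (\<psi> l) (\<psi> u))"
    by (simp add: emeasure_distr pre)
  also have "\<dots> = (\<Prod>a\<in>Basis. (\<psi> u - \<psi> l) \<bullet> a)"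
    using le' by (simp add: emeasure_lborel_box_eq)
  also have "\<dots> = (\<Prod>a\<in>Basis. (u - l) \<bullet> \<phi> a)"
    by (simp add: inner_diff_left key)
  also have "\<dots> = (\<Prod>b\<in>Basis. (u - l) \<bullet> b)"
    using prod.reindex_bij_betw[OF bij, of "\<lambda>b. (u - l) \<bullet> b"] by simp
  finally show "emeasure (distr lborel borel \<phi>) (box l u) = (\<Prod>b\<in>Basis. (u - l) \<bullet> b)" .
qed simp

lemma lborel_orth_vec:
  fixes g :: "real^'n::{finite,wellorder} \<Rightarrow> real^'n::{finite,wellorder}"
  assumes g: "orthogonal_transformation g"
  shows "distr lborel borel g = lborel"
proof (rule lborel_eqI[symmetric])
  have lin: "linear g" using g by (rule orthogonal_transformation_linear)
  have meas[measurable]: "g \<in> borel_measurable borel"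
    using lin by (intro borel_measurable_continuous_onI linear_continuous_on) (simp add: linear_conv_bounded_linear)
  fix l u :: "real^'n::{finite,wellorder}" assume le: "\<And>b. b \<in> Basis \<Longrightarrow> l \<bullet> b \<le> u \<bullet> b"
  have bor: "g -` box l u \<in> sets borel" by (rule measurable_sets_borel[OF meas]) simp
  have eq: "g -` box l u = inv g ` box l u"
    using orthogonal_transformation_bij[OF g] by (simp add: bij_vimage_eq_inv_image)
  have ginv: "orthogonal_transformation (inv g)" using g by (rule orthogonal_transformation_inv)
  have bnd: "bounded (g -` box l u)"
    unfolding eq using orthogonal_transformation_linear[OF ginv]
    by (intro bounded_linear_image) (auto simp: linear_conv_bounded_linear)
  have fin: "emeasure lborel (g -` box l u) < \<infinity>"
    using bnd by (intro emeasure_bounded_finite)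
  have "emeasure (distr lborel borel g) (box l u) = emeasure lborel (g -` box l u)"
    by (simp add: emeasure_distr)
  also have "\<dots> = ennreal (measure lborel (g -` box l u))"
    using fin by (simp add: emeasure_eq_ennreal_measure)
  also have "measure lborel (g -` box l u) = measure lebesgue (inv g ` box l u)"
    using bor eq by simp
  also have "\<dots> = measure lebesgue (box l u)"
    using ginv by (intro measure_orthogonal_image) auto
  also have "\<dots> = measure lborel (box l u)" by simp
  also have "ennreal \<dots> = (\<Prod>b\<in>Basis. (u - l) \<bullet> b)"
    using le by (simp add: measure_lborel_box_eq prod_nonneg)
  finally show "emeasure (distr lborel borel g) (box l u) = (\<Prod>b\<in>Basis. (u - l) \<bullet> b)" .
qed simp

typedef (overloaded) ('a::euclidean_space) bidx = "{..<DIM('a)}" morphisms rep_bidx abs_bidx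
  by (rule exI[of _ 0]) simp

instance bidx :: (euclidean_space) finite
proof
  have "finite (abs_bidx ` {..<DIM('a)})" by simp
  moreover have "(UNIV :: 'a bidx set) = abs_bidx ` {..<DIM('a)}"
    using type_definition.univ[OF type_definition_bidx] by simp
  ultimately show "finite (UNIV :: 'a bidx set)" by metis
qed

instantiation bidx :: (euclidean_space) wellorder
begin
definition less_eq_bidx :: "'a bidx \<Rightarrow> 'a bidx \<Rightarrow> bool" where "less_eq_bidx x y \<longleftrightarrow> rep_bidx x \<le> rep_bidx y"
definition less_bidx :: "'a bidx \<Rightarrow> 'a bidx \<Rightarrow> bool" where "less_bidx x y \<longleftrightarrow> rep_bidx x < rep_bidx y"
instance
proof
  fix P :: "'a bidx \<Rightarrow> bool" and a :: "'a bidx"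
  assume step: "\<And>x. (\<And>y. y < x \<Longrightarrow> P y) \<Longrightarrow> P x"
  have "\<forall>x. rep_bidx x = n \<longrightarrow> P x" for n
    by (induction n rule: less_induct) (metis step less_bidx_def)
  then show "P a" by blast
qed (auto simp: less_eq_bidx_def less_bidx_def rep_bidx_inject)
end

lemma card_Basis_DIM: "card (Basis :: 'a::euclidean_space set) = DIM('a)" by simp

lemma lborel_orth:
  fixes f :: "'a::euclidean_space \<Rightarrow> 'a"
  assumes f: "orthogonal_transformation f"
  shows "distr lborel borel f = lborel"
proof -
  obtain e :: "nat \<Rightarrow> 'a" where e: "bij_betw e {0..<DIM('a)} Basis"
    using ex_bij_betw_nat_finite[of "Basis :: 'a set"] by auto
  define E where "E = (\<lambda>i::'a bidx. e (rep_bidx i))"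
  have E: "bij_betw E UNIV Basis"
  proof -
    have "bij_betw rep_bidx (UNIV :: 'a bidx set) {0..<DIM('a)}"
      unfolding bij_betw_def using type_definition.Rep_range[OF type_definition_bidx]
      by (auto simp: inj_def rep_bidx_inject atLeast0LessThan)
    then show ?thesis unfolding E_def using e by (rule bij_betw_trans[unfolded comp_def])
  qed
  have EB: "E i \<in> Basis" for i using E by (auto simp: bij_betw_def)
  have Einn: "E i \<bullet> E j = (if i = j then 1 else 0)" for i j
    using E EB[of i] EB[of j] by (auto simp: bij_betw_def inj_def inner_Basis)
  define \<phi> :: "'a \<Rightarrow> real^'a bidx" where "\<phi> x = (\<chi> i. x \<bullet> E i)" for x
  define \<psi> :: "real^'a bidx \<Rightarrow> 'a" where "\<psi> v = (\<Sum>i\<in>UNIV. (v $ i) *\<^sub>R E i)" for v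
  have sumB: "(\<Sum>i\<in>UNIV. h (E i)) = (\<Sum>b\<in>Basis. h b)" for h :: "'a \<Rightarrow> 'c::comm_monoid_add"
    using sum.reindex_bij_betw[OF E, of h] .
  have inv1: "\<psi> (\<phi> x) = x" for x
    unfolding \<phi>_def \<psi>_def using sumB[of "\<lambda>b. (x \<bullet> b) *\<^sub>R b"] by (simp add: euclidean_representation)
  have inv2: "\<phi> (\<psi> v) = v" for v
  proof -
    have "(\<Sum>i\<in>UNIV. v $ i *\<^sub>R E i) \<bullet> E j = v $ j" for j
      by (simp add: inner_sum_left Einn if_distrib cong: if_cong)
    then show ?thesis unfolding \<phi>_def \<psi>_def by (simp add: vec_eq_iff)
  qed
  have inn: "\<phi> x \<bullet> \<phi> y = x \<bullet> y" for x y
  proof -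
    have "\<phi> x \<bullet> \<phi> y = (\<Sum>i\<in>UNIV. (x \<bullet> E i) * (y \<bullet> E i))"
      unfolding \<phi>_def inner_vec_def by simp
    also have "\<dots> = (\<Sum>b\<in>Basis. (x \<bullet> b) * (y \<bullet> b))"
      by (rule sumB)
    also have "\<dots> = x \<bullet> y" by (rule euclidean_inner[symmetric])
    finally show ?thesis .
  qed
  have inn2: "\<psi> x \<bullet> \<psi> y = x \<bullet> y" for x y
    by (metis inn inv2)
  have lin1: "linear \<phi>"
    by (rule linearI) (simp_all add: \<phi>_def vec_eq_iff inner_add_left)
  have lin2: "linear \<psi>"
    by (rule linearI) (simp_all add: \<psi>_def scaleR_add_left sum.distrib scaleR_sum_right)
  have \<phi>E: "\<phi> (E i) = axis i 1" for i
    by (simp add: \<phi>_def vec_eq_iff axis_def Einn)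
  have img: "\<phi> ` Basis = Basis"
  proof -
    have "\<phi> ` Basis = \<phi> ` E ` UNIV" using E by (simp add: bij_betw_def)
    also have "\<dots> = range (\<lambda>i. axis i (1::real))" by (auto simp: \<phi>E image_image)
    also have "\<dots> = Basis" by (auto simp: Basis_vec_def)
    finally show ?thesis .
  qed
  have bij1: "bij_betw \<phi> Basis Basis"
    unfolding bij_betw_def using img by (metis inv1 inj_on_inverseI)
  have bij2: "bij_betw \<psi> Basis Basis"
  proof -
    have "\<psi> ` Basis = \<psi> ` \<phi> ` Basis" using img by simp
    also have "\<dots> = Basis" by (simp add: image_image inv1)
    finally show ?thesis unfolding bij_betw_def by (metis inv2 inj_on_inverseI)
  qed
  have L1: "distr lborel borel \<psi> = lborel"
    by (rule lborel_iso[OF lin2 lin1 inv2 inv1 bij2 inn2])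
  define g where "g = \<phi> \<circ> f \<circ> \<psi>"
  have g: "orthogonal_transformation g"
    using f lin1 lin2 unfolding g_def orthogonal_transformation_def
    by (auto simp: inn inn2 intro: linear_compose)
  have Lg: "distr lborel borel g = lborel" by (rule lborel_orth_vec[OF g])
  have cont: "\<And>h :: 'x::euclidean_space \<Rightarrow> 'y::euclidean_space. linear h \<Longrightarrow> h \<in> borel_measurable borel"
    by (intro borel_measurable_continuous_onI linear_continuous_on) (simp add: linear_conv_bounded_linear)
  have [measurable]: "\<psi> \<in> borel_measurable borel" "g \<in> borel_measurable borel" "f \<in> borel_measurable borel"
    using cont lin2 g f orthogonal_transformation_linear by blast+
  have fpsi: "f \<circ> \<psi> = \<psi> \<circ> g" by (auto simp: g_def inv1)
  have "distr lborel borel f = distr (distr lborel borel \<psi>) borel f" by (simp add: L1)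
  also have "\<dots> = distr lborel borel (f \<circ> \<psi>)" by (simp add: distr_distr)
  also have "\<dots> = distr lborel borel (\<psi> \<circ> g)" by (simp add: fpsi)
  also have "\<dots> = distr (distr lborel borel g) borel \<psi>" by (simp add: distr_distr)
  also have "\<dots> = lborel" by (simp add: Lg L1)
  finally show ?thesis .
qed


lemma linear_meas: "linear (h :: 'x::euclidean_space \<Rightarrow> 'y::euclidean_space) \<Longrightarrow> h \<in> borel_measurable borel"
  by (intro borel_measurable_continuous_onI linear_continuous_on) (simp add: linear_conv_bounded_linear)

lemma emeasure_sphere_surface:
  assumes A: "A \<in> sets borel"
  shows "emeasure (sphere_surface :: 'a::euclidean_space measure) A
    = ennreal (real DIM('a)) * emeasure lborel (sgn -` A \<inter> ball 0 1)"
proof -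
  have sm: "sgn \<in> measurable (restrict_space lborel (ball (0::'a) 1)) borel"
    by (intro measurable_restrict_space1) simp
  have "emeasure (sphere_surface :: 'a measure) A
      = ennreal (real DIM('a)) * emeasure (distr (restrict_space lborel (ball (0::'a) 1)) borel sgn) A"
    unfolding sphere_surface_def using A by (simp add: emeasure_density_const)
  also have "emeasure (distr (restrict_space lborel (ball (0::'a) 1)) borel sgn) A
      = emeasure (restrict_space lborel (ball (0::'a) 1)) (sgn -` A \<inter> ball 0 1)"
    using A sm by (simp add: emeasure_distr space_restrict_space)
  also have "\<dots> = emeasure lborel (sgn -` A \<inter> ball 0 1)"
    by (rule emeasure_restrict_space) auto
  finally show ?thesis .
qed

lemma sets_sphere_surface[simp]: "sets (sphere_surface :: 'a::euclidean_space measure) = sets borel"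
  unfolding sphere_surface_def by simp

lemma space_sphere_surface[simp]: "space (sphere_surface :: 'a::euclidean_space measure) = UNIV"
  unfolding sphere_surface_def by simp

lemma sphere_surface_orth:
  fixes f :: "'a::euclidean_space \<Rightarrow> 'a"
  assumes f: "orthogonal_transformation f"
  shows "distr sphere_surface borel f = sphere_surface"
proof (rule measure_eqI)
  have lin: "linear f" using f by (rule orthogonal_transformation_linear)
  have fm[measurable]: "f \<in> borel_measurable borel" using lin by (rule linear_meas)
  have nf: "norm (f x) = norm x" for x using f by (rule orthogonal_transformation_norm)
  have sgnf: "sgn (f x) = f (sgn x)" for x
    using nf[of x] lin by (simp add: sgn_div_norm linear_scale[OF lin] divide_inverse)
  fix A :: "'a set" assume "A \<in> sets (distr sphere_surface borel f)"
  then have A[measurable]: "A \<in> sets borel" by simp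
  have S: "sgn -` A \<inter> ball 0 1 \<in> sets borel"
    using A by (intro sets.Int measurable_sets_borel[OF borel_measurable_sgn]) auto
  have eq: "sgn -` (f -` A) \<inter> ball 0 1 = f -` (sgn -` A \<inter> ball 0 1)"
    by (auto simp: sgnf nf)
  have "measurable sphere_surface borel = measurable (borel :: 'a measure) (borel :: 'a measure)"
    by (rule measurable_cong_sets) simp_all
  then have fm2: "f \<in> measurable sphere_surface borel" using fm by simp
  have "emeasure (distr sphere_surface borel f) A = emeasure sphere_surface (f -` A)"
    using emeasure_distr[OF fm2 A] by simp
  also have "\<dots> = ennreal (real DIM('a)) * emeasure lborel (f -` (sgn -` A \<inter> ball 0 1))"
    using measurable_sets_borel[OF fm A] by (subst emeasure_sphere_surface) (auto simp: eq)
  also have "emeasure lborel (f -` (sgn -` A \<inter> ball 0 1)) = emeasure (distr lborel borel f) (sgn -` A \<inter> ball 0 1)"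
    using S by (simp add: emeasure_distr)
  also have "\<dots> = emeasure lborel (sgn -` A \<inter> ball 0 1)"
    by (simp add: lborel_orth[OF f])
  also have "ennreal (real DIM('a)) * \<dots> = emeasure sphere_surface A"
    by (simp add: emeasure_sphere_surface)
  finally show "emeasure (distr sphere_surface borel f) A = emeasure sphere_surface A" .
qed simp

lemma density_invariant:
  fixes f :: "'a::euclidean_space \<Rightarrow> 'a" and h :: "'a \<Rightarrow> ennreal"
  assumes f: "orthogonal_transformation f" and h: "h \<in> borel_measurable borel"
    and hf: "\<And>x. h (f x) = h x"
  shows "distr (density sphere_surface h) borel f = density sphere_surface h"
proof -
  have fm[measurable]: "f \<in> borel_measurable borel"
    using orthogonal_transformation_linear[OF f] by (rule linear_meas)
  have "measurable sphere_surface borel = measurable (borel :: 'a measure) (borel :: 'a measure)"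
    by (rule measurable_cong_sets) simp_all
  then have fm2: "f \<in> measurable sphere_surface borel" using fm by simp
  have "density (distr sphere_surface borel f) h = distr (density sphere_surface (\<lambda>x. h (f x))) borel f"
    by (rule density_distr[OF h fm2])
  then have "density sphere_surface h = distr (density sphere_surface h) borel f"
    unfolding sphere_surface_orth[OF f] hf .
  then show ?thesis by (rule sym)
qed

definition hrefl :: "'a::euclidean_space \<Rightarrow> 'a \<Rightarrow> 'a" where
  "hrefl w x = x - (2 * (w \<bullet> x) / (w \<bullet> w)) *\<^sub>R w"

lemma hrefl_linear: "linear (hrefl w)"
  by (rule linearI) (simp_all add: hrefl_def inner_add_right algebra_simps add_divide_distrib scaleR_add_left)

lemma hrefl_invol: "w \<noteq> 0 \<Longrightarrow> hrefl w (hrefl w x) = x"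
  by (simp add: hrefl_def inner_diff_right algebra_simps)

lemma hrefl_orth: "w \<noteq> 0 \<Longrightarrow> orthogonal_transformation (hrefl w)"
  unfolding orthogonal_transformation_def
  by (simp add: hrefl_linear hrefl_def inner_diff_left inner_diff_right algebra_simps power2_eq_square) (simp add: field_simps inner_commute)


lemma S1_invariant:
  fixes \<mu>0 \<mu>1 w :: "'a::euclidean_space"
  assumes w: "w \<noteq> 0" "w \<bullet> \<mu>0 = 0" "w \<bullet> \<mu>1 = 0"
  shows "distr (S1 \<mu>0 \<mu>1 \<kappa>0 \<kappa>1) borel (hrefl w) = S1 \<mu>0 \<mu>1 \<kappa>0 \<kappa>1"
proof -
  let ?h = "\<lambda>x. ennreal (S1_dens \<mu>0 \<mu>1 \<kappa>0 \<kappa>1 x /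
                     integral\<^sup>L sphere_surface (S1_dens \<mu>0 \<mu>1 \<kappa>0 \<kappa>1))"
  have inv: "\<mu> \<bullet> hrefl w x = \<mu> \<bullet> x" if "w \<bullet> \<mu> = 0" for \<mu> x
    using that by (simp add: hrefl_def inner_diff_right inner_commute)
  have hf: "?h (hrefl w x) = ?h x" for x
    using w by (simp add: S1_dens_def inv)
  have hm: "?h \<in> borel_measurable borel"
    unfolding S1_dens_def by measurable
  show ?thesis unfolding S1_def
    by (rule density_invariant[OF hrefl_orth[OF w(1)] hm hf])
qed

theorem mainTheorem2:
  fixes M :: "'b measure" and X :: "'b \<Rightarrow> 'a::euclidean_space"
    and \<mu>0 \<mu>1 :: 'a and \<kappa>0 \<kappa>1 :: real
  assumes "DIM('a) \<ge> 3"
    and "norm \<mu>0 = 1" and "norm \<mu>1 = 1"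
    and "\<mu>0 \<bullet> \<mu>1 \<in> {-1<..<1}"
    and "\<kappa>0 > 0" and "\<kappa>1 > 0"
    and "prob_space M"
    and "X \<in> borel_measurable M"
    and "distr M borel X = S1 \<mu>0 \<mu>1 \<kappa>0 \<kappa>1"
  shows "\<exists>a b :: real. prob_space.expectation M X = a *\<^sub>R \<mu>0 + b *\<^sub>R \<mu>1"
proof -
  let ?N = "S1 \<mu>0 \<mu>1 \<kappa>0 \<kappa>1"
  define E where "E = integral\<^sup>L M X"
  have EN: "E = integral\<^sup>L ?N (\<lambda>x. x)"
    unfolding E_def assms(9)[symmetric] using assms(8) by (simp add: integral_distr)
  have sN: "sets ?N = sets borel" unfolding S1_def by simp
  have fixE: "hrefl w E = E" if w: "w \<noteq> 0" "w \<bullet> \<mu>0 = 0" "w \<bullet> \<mu>1 = 0" for w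
  proof -
    have lin: "bounded_linear (hrefl w)" using hrefl_linear[of w] by (simp add: linear_conv_bounded_linear)
    have "measurable ?N borel = measurable (borel :: 'a measure) (borel :: 'a measure)"
      by (rule measurable_cong_sets) (simp_all add: sN)
    then have hm: "hrefl w \<in> measurable ?N borel"
      using linear_meas[OF hrefl_linear[of w]] by simp
    have "E = integral\<^sup>L (distr ?N borel (hrefl w)) (\<lambda>x. x)"
      by (simp add: EN S1_invariant[OF w])
    also have "\<dots> = integral\<^sup>L ?N (\<lambda>x. hrefl w x)"
      using hm by (simp add: integral_distr)
    also have "\<dots> = hrefl w (integral\<^sup>L ?N (\<lambda>x. x))"
      by (rule integral_bounded_linear'[OF lin lin]) (simp add: hrefl_invol[OF w(1)])
    finally show ?thesis by (simp add: EN)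
  qed
  define \<nu> where "\<nu> = \<mu>0 \<bullet> \<mu>1"
  have nu: "1 - \<nu>\<^sup>2 \<noteq> 0"
    using assms(4) unfolding \<nu>_def by (auto simp: power2_eq_square abs_square_eq_1 square_eq_1_iff)
  have n0: "\<mu>0 \<bullet> \<mu>0 = 1" "\<mu>1 \<bullet> \<mu>1 = 1"
    using assms(2,3) by (metis power2_norm_eq_inner power_one)+
  define a where "a = (E \<bullet> \<mu>0 - \<nu> * (E \<bullet> \<mu>1)) / (1 - \<nu>\<^sup>2)"
  define b where "b = (E \<bullet> \<mu>1 - \<nu> * (E \<bullet> \<mu>0)) / (1 - \<nu>\<^sup>2)"
  define w where "w = E - a *\<^sub>R \<mu>0 - b *\<^sub>R \<mu>1"
  have nu10: "\<mu>1 \<bullet> \<mu>0 = \<nu>" "\<mu>0 \<bullet> \<mu>1 = \<nu>" by (simp_all add: \<nu>_def inner_commute)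
  have w0': "w \<bullet> \<mu>0 = E \<bullet> \<mu>0 - a - b * \<nu>"
    unfolding w_def by (simp add: inner_diff_left n0 nu10)
  have w1': "w \<bullet> \<mu>1 = E \<bullet> \<mu>1 - a * \<nu> - b"
    unfolding w_def by (simp add: inner_diff_left n0 nu10)
  have "a + b * \<nu> = E \<bullet> \<mu>0"
    using nu unfolding a_def b_def by (simp add: divide_simps) (simp add: power2_eq_square algebra_simps)
  then have w0: "w \<bullet> \<mu>0 = 0" using w0' by simp
  have "a * \<nu> + b = E \<bullet> \<mu>1"
    using nu unfolding a_def b_def by (simp add: divide_simps) (simp add: power2_eq_square algebra_simps)
  then have w1: "w \<bullet> \<mu>1 = 0" using w1' by simp
  have "w = 0"
  proof (rule ccontr)
    assume wn: "w \<noteq> 0"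
    have Ew: "w \<bullet> E = w \<bullet> w"
    proof -
      have "E = w + a *\<^sub>R \<mu>0 + b *\<^sub>R \<mu>1" by (simp add: w_def)
      then show ?thesis using w0 w1 by (metis inner_add_right inner_scaleR_right mult_zero_right add_0_right)
    qed
    have "hrefl w E = E - 2 *\<^sub>R w"
      using wn by (simp add: hrefl_def Ew)
    with fixE[OF wn w0 w1] wn show False by simp
  qed
  then have "integral\<^sup>L M X = a *\<^sub>R \<mu>0 + b *\<^sub>R \<mu>1"
    unfolding E_def[symmetric] by (simp add: w_def algebra_simps)
  then show ?thesis by blast
qed

end
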